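(* Let $\mathcal T$ be a text, let $u=\mathrm{locus}(\alpha)$ be an explicit node of its suffix tree, and let $\mathtt{st\text{-}lex}[b,e]$ be the range containing the text positions $j\in\mathtt{st\text{-}lex}$ such that $\mathcal T[1,j]$ is suffixed by $\alpha$. Then all (and only) the letters labeling the outgoing edges from node $u$ appear in $\mathcal L[b,e]\setminus\{\#\}$, that is, $\mathrm{out}(u)=\{c: c\in\mathcal L[b,e]\wedge c\ne\#\}$.
   Context: A text is a string $\mathcal T\in\Sigma^n$ over an integer alphabet whose last symbol $\mathcal T[n]=\$$ occurs only there and is smallest. $\mathrm{locus}(\alpha)$ is the suffix tree node whose root-to-node path label is $\alpha$; $\mathrm{out}(u)$ is the set of first characters of the labels of the outgoing edges of $u$. $\mathrm{ISA}[i]$ is the lexicographic rank of suffix $\mathcal T[i,n]$. For $i\ne j$, $\mathrm{rlce}(i,j)$ is the length of the longest common prefix of $\mathcal T[i,n]$ and $\mathcal T[j,n]$. For a permutation $\pi$, $\mathrm{LPF}_\pi[i]=0$ if $\pi(i)=1$, else $\mathrm{LPF}_\pi[i]=\max_{\pi(j)<\pi(i)}\mathrm{rlce}(j,i)$, and $\mathrm{PDA}_\pi=\{i+\mathrm{LPF}_\pi[i]:i\in[n]\}$. Let $\mathtt{st\text{-}lex}^-=\mathrm{PDA}_\pi$ for $\pi(i)=\mathrm{ISA}[i]$ and $\mathtt{st\text{-}lex}^+=\mathrm{PDA}_{\bar\pi}$ for $\bar\pi(i)=n-\mathrm{ISA}[i]+1$. The array $\mathtt{st\text{-}lex}$ lists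 the set $\{i-1: i\in\mathtt{st\text{-}lex}^-\cup\mathtt{st\text{-}lex}^+\cup\{n+1\}\}$ sorted colexicographically by the prefixes $\mathcal T[1,j]$ ($\mathcal T[1,0]$ being empty). With $\#\notin\Sigma$ a new symbol, $\mathcal L$ is the string of length $|\mathtt{st\text{-}lex}|$ with $\mathcal L[i]=\#$ if $\mathtt{st\text{-}lex}[i]=n$ and $\mathcal L[i]=\mathcal T[\mathtt{st\text{-}lex}[i]+1]$ otherwise. *)

theory Defs
  imports Main "HOL-Library.Sublist"
begin

text \<open>Texts are lists of integers, positions are 1-based: position i of T is T ! (i - 1).\<close>

definition is_text :: "int list \<Rightarrow> bool" where
  "is_text T \<longleftrightarrow> T \<noteq> [] \<and> (\<forall>x \<in> set (butlast T). last T < x)"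

definition suf :: "int list \<Rightarrow> nat \<Rightarrow> int list" where
  "suf T i = drop (i - 1) T"

definition pref :: "int list \<Rightarrow> nat \<Rightarrow> int list" where
  "pref T j = take j T"

definition lex_less :: "int list \<Rightarrow> int list \<Rightarrow> bool" where
  "lex_less xs ys \<longleftrightarrow> (xs, ys) \<in> lexord {(a, b). a < b}"

definition ISA :: "int list \<Rightarrow> nat \<Rightarrow> nat" where
  "ISA T i = Suc (card {j \<in> {1..length T}. lex_less (suf T j) (suf T i)})"

fun lcp :: "int list \<Rightarrow> int list \<Rightarrow> nat" where
  "lcp (x # xs) (y # ys) = (if x = y then Suc (lcp xs ys) else 0)"
| "lcp _ _ = 0"

definition rlce :: "int list \<Rightarrow> nat \<Rightarrow> nat \<Rightarrow> nat" where
  "rlce T i j = lcp (suf T i) (suf T j)"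

definition LPF :: "int list \<Rightarrow> (nat \<Rightarrow> nat) \<Rightarrow> nat \<Rightarrow> nat" where
  "LPF T \<pi> i = (if \<pi> i = 1 then 0
     else Max {rlce T j i | j. j \<in> {1..length T} \<and> \<pi> j < \<pi> i})"

definition PDA :: "int list \<Rightarrow> (nat \<Rightarrow> nat) \<Rightarrow> nat set" where
  "PDA T \<pi> = {i + LPF T \<pi> i | i. i \<in> {1..length T}}"

definition st_lex_minus :: "int list \<Rightarrow> nat set" where
  "st_lex_minus T = PDA T (ISA T)"

definition st_lex_plus :: "int list \<Rightarrow> nat set" where
  "st_lex_plus T = PDA T (\<lambda>i. length T - ISA T i + 1)"

definition st_lex_set :: "int list \<Rightarrow> nat set" where
  "st_lex_set T = {i - 1 | i. i \<in> st_lex_minus T \<union> st_lex_plus T \<union> {length T + 1}}"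

definition colex_less :: "int list \<Rightarrow> nat \<Rightarrow> nat \<Rightarrow> bool" where
  "colex_less T j k \<longleftrightarrow> lex_less (rev (pref T j)) (rev (pref T k))"

text \<open>L[k] for the array SL (1-based k); None encodes the new symbol #.\<close>
definition Lsym :: "int list \<Rightarrow> nat list \<Rightarrow> nat \<Rightarrow> int option" where
  "Lsym T SL k = (if SL ! (k - 1) = length T then None else Some (T ! (SL ! (k - 1))))"

text \<open>Suffix tree notions: out(locus alpha) = first letters of outgoing edges, i.e. the
  letters c such that alpha c occurs in T; locus(alpha) is an explicit node iff alpha
  occurs in T and is the root (empty), a leaf (a suffix of T) or a branching node.\<close>
definition out :: "int list \<Rightarrow> int list \<Rightarrow> int set" where
  "out T \<alpha> = {c. sublist (\<alpha> @ [c]) T}"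

definition explicit_node :: "int list \<Rightarrow> int list \<Rightarrow> bool" where
  "explicit_node T \<alpha> \<longleftrightarrow> sublist \<alpha> T \<and> (\<alpha> = [] \<or> suffix \<alpha> T \<or> card (out T \<alpha>) \<ge> 2)"

end

theory Submission
  imports Defs
begin

lemma lcp_le: "lcp xs ys \<le> length ys"
  by (induction xs ys rule: lcp.induct) auto

lemma lcp_take: "m \<le> lcp xs ys \<Longrightarrow> take m xs = take m ys \<and> m \<le> length xs"
proof (induction xs ys arbitrary: m rule: lcp.induct)
  case (1 x xs y ys)
  then show ?case
    by (cases m) (auto split: if_splits)
qed auto

lemma lcp_append: "lcp (u @ xs) (u @ ys) = length u + lcp xs ys"
  by (induction u) auto

lemma lcp_diff: "a \<noteq> b \<Longrightarrow> lcp (a # xs) (b # ys) = 0"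
  by simp

lemma lex_less_irrefl: "\<not> lex_less xs xs"
  unfolding lex_less_def by (rule lexord_irreflexive) auto

lemma lex_less_trans: "lex_less xs ys \<Longrightarrow> lex_less ys zs \<Longrightarrow> lex_less xs zs"
  unfolding lex_less_def by (erule lexord_trans) (auto simp: trans_def)

lemma lex_less_linear: "lex_less xs ys \<or> xs = ys \<or> lex_less ys xs"
  unfolding lex_less_def by (rule lexord_linear) auto

lemma lex_less_branch: "a < b \<Longrightarrow> lex_less (u @ a # xs) (u @ b # ys)"
  unfolding lex_less_def by (rule lexord_append_left_rightI) simp

lemma suf_inj: "i \<in> {1..length T} \<Longrightarrow> j \<in> {1..length T} \<Longrightarrow> suf T i = suf T j \<Longrightarrow> i = j"
proof -
  assume a: "i \<in> {1..length T}" "j \<in> {1..length T}" "suf T i = suf T j"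
  then have "length (suf T i) = length (suf T j)" by simp
  then have "length T - (i - 1) = length T - (j - 1)" by (simp add: suf_def)
  then show "i = j" using a(1,2) by auto
qed

lemma ISA_mono:
  assumes "j \<in> {1..length T}" "lex_less (suf T j) (suf T i)"
  shows "ISA T j < ISA T i"
proof -
  let ?A = "\<lambda>i. {k \<in> {1..length T}. lex_less (suf T k) (suf T i)}"
  have "?A j \<subseteq> ?A i" using assms(2) lex_less_trans by blast
  moreover have "j \<in> ?A i" "j \<notin> ?A j" using assms lex_less_irrefl by auto
  ultimately have "?A j \<subset> ?A i" by blast
  then have "card (?A j) < card (?A i)" by (rule psubset_card_mono[rotated]) simp
  then show ?thesis unfolding ISA_def by simp
qed

lemma ISA_le:
  assumes "i \<in> {1..length T}"
  shows "ISA T i \<le> length T"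
proof -
  let ?A = "{k \<in> {1..length T}. lex_less (suf T k) (suf T i)}"
  have "?A \<subseteq> {1..length T} - {i}" using lex_less_irrefl by auto
  then have "card ?A \<le> card ({1..length T} - {i})" by (intro card_mono) auto
  also have "\<dots> = length T - 1" using assms by simp
  finally have "card ?A \<le> length T - 1" .
  moreover have "1 \<le> length T" using assms by simp
  ultimately show ?thesis unfolding ISA_def by linarith
qed

lemma ISA_lt_exists:
  assumes "i \<in> {1..length T}" "ISA T i \<noteq> 1"
  shows "\<exists>j\<in>{1..length T}. ISA T j < ISA T i"
proof -
  let ?A = "{k \<in> {1..length T}. lex_less (suf T k) (suf T i)}"
  have "card ?A \<noteq> 0" using assms(2) unfolding ISA_def by simp
  then have "?A \<noteq> {}" by (metis card.empty)
  then obtain k where "k \<in> ?A" by blast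
  then show ?thesis using ISA_mono by blast
qed

lemma ISA_gt_exists:
  assumes "i \<in> {1..length T}" "ISA T i < length T"
  shows "\<exists>j\<in>{1..length T}. ISA T i < ISA T j"
proof -
  let ?A = "{k \<in> {1..length T}. lex_less (suf T k) (suf T i)}"
  have c: "card ?A < length T - 1" using assms(2) unfolding ISA_def by simp
  have "\<not> ({1..length T} - {i} \<subseteq> ?A)"
  proof
    assume "{1..length T} - {i} \<subseteq> ?A"
    then have "card ({1..length T} - {i}) \<le> card ?A" by (intro card_mono) auto
    then show False using c assms(1) by simp
  qed
  then obtain j where j: "j \<in> {1..length T}" "j \<noteq> i" "\<not> lex_less (suf T j) (suf T i)" by blast
  then have "suf T j \<noteq> suf T i" using suf_inj assms(1) by blast
  then have "lex_less (suf T i) (suf T j)" using j(3) lex_less_linear by blast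
  then show ?thesis using ISA_mono assms(1) j(1) by blast
qed

lemma LPF_bound:
  assumes "q \<in> {1..length T}" "\<pi> q \<noteq> 1 \<Longrightarrow> \<exists>j\<in>{1..length T}. \<pi> j < \<pi> q"
  shows "LPF T \<pi> q \<le> length T + 1 - q"
proof (cases "\<pi> q = 1")
  case True then show ?thesis by (simp add: LPF_def)
next
  case False
  let ?S = "{rlce T j q | j. j \<in> {1..length T} \<and> \<pi> j < \<pi> q}"
  have fin: "finite ?S" by simp
  have ne: "?S \<noteq> {}" using assms(2)[OF False] by blast
  have "\<forall>x\<in>?S. x \<le> length T + 1 - q"
    using lcp_le[of _ "suf T q"] assms(1) by (auto simp: rlce_def suf_def)
  then have "Max ?S \<le> length T + 1 - q" using fin ne by simp
  then show ?thesis using False by (simp add: LPF_def)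
qed

lemma pos_ISA: "\<And>q. q \<in> {1..length T} \<Longrightarrow> ISA T q \<noteq> 1 \<Longrightarrow> \<exists>j\<in>{1..length T}. ISA T j < ISA T q"
  using ISA_lt_exists by blast

lemma pos_bar: "\<And>q. q \<in> {1..length T} \<Longrightarrow> length T - ISA T q + 1 \<noteq> 1 \<Longrightarrow>
   \<exists>j\<in>{1..length T}. length T - ISA T j + 1 < length T - ISA T q + 1"
proof -
  fix q assume q: "q \<in> {1..length T}" "length T - ISA T q + 1 \<noteq> 1"
  then have "ISA T q < length T" using ISA_le[OF q(1)] by simp
  then obtain j where "j \<in> {1..length T}" "ISA T q < ISA T j" using ISA_gt_exists q(1) by blast
  then show "\<exists>j\<in>{1..length T}. length T - ISA T j + 1 < length T - ISA T q + 1"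
    using ISA_le[of j T] by (intro bexI[of _ j]) auto
qed

lemma PDA_bound:
  assumes "x \<in> PDA T \<pi>" "\<And>q. q \<in> {1..length T} \<Longrightarrow> \<pi> q \<noteq> 1 \<Longrightarrow> \<exists>j\<in>{1..length T}. \<pi> j < \<pi> q"
  shows "x \<le> length T + 1"
proof -
  obtain q where q: "x = q + LPF T \<pi> q" "q \<in> {1..length T}" using assms(1) unfolding PDA_def by blast
  have "LPF T \<pi> q \<le> length T + 1 - q" using LPF_bound[of q T \<pi>] q assms(2)[OF q(2)] by blast
  then have "q + LPF T \<pi> q \<le> q + (length T + 1 - q)" by (rule add_left_mono)
  also have "\<dots> = length T + 1" using q(2) by simp
  finally show ?thesis using q(1) by simp
qed

lemma st_lex_bound: "j \<in> st_lex_set T \<Longrightarrow> j \<le> length T"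
  unfolding st_lex_set_def st_lex_minus_def st_lex_plus_def
  using PDA_bound[of _ T "ISA T", OF _ pos_ISA] PDA_bound[of _ T "\<lambda>i. length T - ISA T i + 1", OF _ pos_bar]
  by fastforce

lemma key:
  assumes p: "p \<in> {1..length T}" "suf T p = \<alpha> @ c # rest"
    and mn: "\<forall>q\<in>{1..length T}. prefix (\<alpha> @ [c]) (suf T q) \<longrightarrow> \<pi> p \<le> \<pi> q"
    and pos: "\<pi> p \<noteq> 1 \<Longrightarrow> \<exists>j\<in>{1..length T}. \<pi> j < \<pi> p"
    and ge1: "\<forall>j. 1 \<le> \<pi> j"
    and low: "\<alpha> \<noteq> [] \<Longrightarrow> \<exists>j\<in>{1..length T}. \<pi> j < \<pi> p \<and> (\<exists>c' r. suf T j = \<alpha> @ c' # r \<and> c' \<noteq> c)"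
  shows "LPF T \<pi> p = length \<alpha>"
proof (cases "\<pi> p = 1")
  case True
  then have "\<alpha> = []" using low ge1 by (metis less_le_not_le)
  then show ?thesis using True by (simp add: LPF_def)
next
  case False
  let ?S = "{rlce T j p | j. j \<in> {1..length T} \<and> \<pi> j < \<pi> p}"
  have fin: "finite ?S" by simp
  have ne: "?S \<noteq> {}" using pos[OF False] by blast
  have up: "\<forall>x\<in>?S. x \<le> length \<alpha>"
  proof (rule ccontr)
    assume "\<not> (\<forall>x\<in>?S. x \<le> length \<alpha>)"
    then obtain j where j: "j \<in> {1..length T}" "\<pi> j < \<pi> p" "Suc (length \<alpha>) \<le> lcp (suf T j) (suf T p)"
      by (auto simp: rlce_def)
    from lcp_take[OF j(3)] have "take (Suc (length \<alpha>)) (suf T j) = \<alpha> @ [c]"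
      "Suc (length \<alpha>) \<le> length (suf T j)" using p(2) by auto
    then have "prefix (\<alpha> @ [c]) (suf T j)" by (metis take_is_prefix)
    then show False using mn j by fastforce
  qed
  have "Max ?S \<le> length \<alpha>" using up fin ne by simp
  moreover have "length \<alpha> \<le> Max ?S"
  proof (cases "\<alpha> = []")
    case True then show ?thesis by simp
  next
    case False
    then obtain j c' r where j: "j \<in> {1..length T}" "\<pi> j < \<pi> p" "suf T j = \<alpha> @ c' # r" "c' \<noteq> c"
      using low by blast
    have "rlce T j p = length \<alpha>" using j p(2) by (simp add: rlce_def lcp_append)
    then have "length \<alpha> \<in> ?S" using j(1,2) by (metis (mono_tags, lifting) mem_Collect_eq)
    then show ?thesis using fin by simp
  qed
  ultimately show ?thesis using False by (simp add: LPF_def)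
qed

lemma pos_fact:
  assumes "q \<in> {1..length T}" "suf T q = \<alpha> @ c # rest"
  shows "q - 1 + length \<alpha> < length T \<and> suffix \<alpha> (pref T (q - 1 + length \<alpha>)) \<and> T ! (q - 1 + length \<alpha>) = c"
proof -
  define ps where "ps = take (q - 1) T"
  have T: "T = ps @ \<alpha> @ c # rest" using assms(2) unfolding ps_def suf_def by (metis append_take_drop_id)
  have l: "length ps = q - 1" using assms(1) unfolding ps_def by (auto simp add: min_def)
  have e: "q - 1 + length \<alpha> = length ps + length \<alpha>" using l by simp
  have "take (length ps + length \<alpha>) T = ps @ \<alpha>" using T by simp
  moreover have "T ! (length ps + length \<alpha>) = c" using T by (simp add: nth_append)
  moreover have "length ps + length \<alpha> < length T" using T by simp
  ultimately show ?thesis unfolding pref_def e by (simp add: suffix_def)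
qed

lemma st_lex_in:
  assumes "p \<in> {1..length T}" "LPF T \<pi> p = length \<alpha>"
    and "\<pi> = ISA T \<or> \<pi> = (\<lambda>i. length T - ISA T i + 1)"
  shows "p - 1 + length \<alpha> \<in> st_lex_set T"
proof -
  have "p + length \<alpha> \<in> PDA T \<pi>" using assms(1,2) unfolding PDA_def by (metis (mono_tags, lifting) mem_Collect_eq)
  then have "p + length \<alpha> \<in> st_lex_minus T \<union> st_lex_plus T"
    using assms(3) unfolding st_lex_minus_def st_lex_plus_def by auto
  then show ?thesis unfolding st_lex_set_def using assms(1)
    by (intro CollectI exI[of _ "p + length \<alpha>"]) auto
qed

lemma sublist_pos:
  assumes "sublist (\<alpha> @ [c]) T"
  shows "\<exists>q\<in>{1..length T}. \<exists>rest. suf T q = \<alpha> @ c # rest"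
proof -
  obtain ps ss where T: "T = ps @ (\<alpha> @ [c]) @ ss" using assms by (auto simp: sublist_def)
  show ?thesis
    by (rule bexI[of _ "Suc (length ps)"]) (auto simp: T suf_def)
qed

lemma hard:
  assumes istext: "is_text T" and en: "explicit_node T \<alpha>" and c: "c \<in> out T \<alpha>"
  shows "\<exists>j\<in>st_lex_set T. j < length T \<and> suffix \<alpha> (pref T j) \<and> T ! j = c"
proof -
  let ?n = "length T"
  let ?S = "\<lambda>q. q \<in> {1..?n} \<and> prefix (\<alpha> @ [c]) (suf T q)"
  have sl: "sublist (\<alpha> @ [c]) T" using c by (simp add: out_def)
  then obtain q0 r0 where q0: "q0 \<in> {1..?n}" "suf T q0 = \<alpha> @ c # r0" using sublist_pos by blast
  have Sq0: "?S q0" using q0 by simp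
  have pre: "\<And>q. ?S q \<Longrightarrow> \<exists>r. suf T q = \<alpha> @ c # r" by (auto simp: prefix_def)
  let ?G = "\<exists>j\<in>st_lex_set T. j < length T \<and> suffix \<alpha> (pref T j) \<and> T ! j = c"
  have fin: "?G" if a: "?S p" "LPF T \<pi> p = length \<alpha>" "\<pi> = ISA T \<or> \<pi> = (\<lambda>i. ?n - ISA T i + 1)" for p \<pi>
  proof -
    obtain r where r: "suf T p = \<alpha> @ c # r" using pre[OF a(1)] by blast
    show ?G using st_lex_in[OF _ a(2,3)] a(1) pos_fact[OF _ r] by blast
  qed
  obtain pI where pI: "?S pI" "\<forall>q. ?S q \<longrightarrow> ISA T pI \<le> ISA T q"
    using ex_has_least_nat[of ?S q0 "ISA T"] Sq0 by blast
  obtain pB where pB: "?S pB" "\<forall>q. ?S q \<longrightarrow> ?n - ISA T pB + 1 \<le> ?n - ISA T q + 1"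
    using ex_has_least_nat[of ?S q0 "\<lambda>i. ?n - ISA T i + 1"] Sq0 by blast
  obtain rI where rI: "suf T pI = \<alpha> @ c # rI" using pre[OF pI(1)] by blast
  obtain rB where rB: "suf T pB = \<alpha> @ c # rB" using pre[OF pB(1)] by blast
  show ?thesis
  proof (cases "\<alpha> = []")
    case True
    have "LPF T (ISA T) pI = length \<alpha>"
      by (rule key[OF _ rI]) (use pI pos_ISA True in \<open>auto simp: ISA_def\<close>)
    then show ?thesis using fin pI(1) by blast
  next
    case ne: False
    show ?thesis
    proof (cases "2 \<le> card (out T \<alpha>)")
      case True
      have "\<not> out T \<alpha> \<subseteq> {c}"
      proof
        assume "out T \<alpha> \<subseteq> {c}"
        then have "card (out T \<alpha>) \<le> card {c}" by (intro card_mono) auto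
        then show False using True by simp
      qed
      then obtain c' where c': "c' \<in> out T \<alpha>" "c' \<noteq> c" by blast
      then obtain q' r' where q': "q' \<in> {1..?n}" "suf T q' = \<alpha> @ c' # r'"
        using sublist_pos[of \<alpha> c' T] by (auto simp: out_def)
      show ?thesis
      proof (cases "c' < c")
        case True
        have "lex_less (suf T q') (suf T pI)" using q'(2) rI lex_less_branch True by simp
        then have lt: "ISA T q' < ISA T pI" using ISA_mono q'(1) by blast
        have "LPF T (ISA T) pI = length \<alpha>"
        proof (rule key[OF _ rI])
          show "pI \<in> {1..?n}" using pI(1) by simp
          show "\<forall>q\<in>{1..?n}. prefix (\<alpha> @ [c]) (suf T q) \<longrightarrow> ISA T pI \<le> ISA T q" using pI(2) by blast
          show "\<exists>j\<in>{1..?n}. ISA T j < ISA T pI" using lt q'(1) by blast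
          show "\<forall>j. 1 \<le> ISA T j" by (simp add: ISA_def)
          show "\<exists>j\<in>{1..?n}. ISA T j < ISA T pI \<and> (\<exists>c' r. suf T j = \<alpha> @ c' # r \<and> c' \<noteq> c)"
            using lt q' c'(2) by blast
        qed
        then show ?thesis using fin pI(1) by blast
      next
        case False
        then have "c < c'" using c' by simp
        then have "lex_less (suf T pB) (suf T q')" using q'(2) rB lex_less_branch by simp
        then have lt: "ISA T pB < ISA T q'" using ISA_mono pB(1) by blast
        have le: "ISA T q' \<le> ?n" using ISA_le q'(1) by blast
        have "LPF T (\<lambda>i. ?n - ISA T i + 1) pB = length \<alpha>"
        proof (rule key[OF _ rB])
          have le2: "ISA T pB \<le> ?n" using ISA_le pB(1) by blast
          have lt2: "?n - ISA T q' + 1 < ?n - ISA T pB + 1" using lt le le2 by linarith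
          show "pB \<in> {1..?n}" using pB(1) by simp
          show "\<forall>q\<in>{1..?n}. prefix (\<alpha> @ [c]) (suf T q) \<longrightarrow> ?n - ISA T pB + 1 \<le> ?n - ISA T q + 1" using pB(2) by blast
          show "\<exists>j\<in>{1..?n}. ?n - ISA T j + 1 < ?n - ISA T pB + 1" using lt2 q'(1) by blast
          show "\<forall>j. 1 \<le> ?n - ISA T j + 1" by simp
          show "\<exists>j\<in>{1..?n}. ?n - ISA T j + 1 < ?n - ISA T pB + 1 \<and> (\<exists>c' r. suf T j = \<alpha> @ c' # r \<and> c' \<noteq> c)"
            using lt2 q' c'(2) by blast
        qed
        then show ?thesis using fin pB(1) by blast
      qed
    next
      case False
      then have suf: "suffix \<alpha> T" using en ne by (simp add: explicit_node_def)
      then obtain qs where T1: "T = qs @ \<alpha>" by (auto simp: suffix_def)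
      obtain ps ss where T2: "T = ps @ \<alpha> @ c # ss" using sl by (auto simp: sublist_def)
      have lT: "last T = last \<alpha>" using T1 ne by simp
      have "butlast T = ps @ \<alpha> @ butlast (c # ss)" using T2 by (simp add: butlast_append)
      then have "last \<alpha> \<in> set (butlast T)" using ne by simp
      then have "last T < last \<alpha>" using istext by (simp add: is_text_def)
      then show ?thesis using lT by simp
    qed
  qed
qed

theorem corollary25:
  fixes T \<alpha> :: "int list" and SL :: "nat list" and b e :: nat
  assumes "is_text T"
    and "explicit_node T \<alpha>"
    and "set SL = st_lex_set T" and "sorted_wrt (colex_less T) SL"
    and "1 \<le> b" and "e \<le> length SL"
    and "\<forall>k \<in> {1..length SL}. (b \<le> k \<and> k \<le> e) \<longleftrightarrow> suffix \<alpha> (pref T (SL ! (k - 1)))"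
  shows "out T \<alpha> = {c. \<exists>k \<in> {b..e}. Lsym T SL k = Some c}"
proof
  show "out T \<alpha> \<subseteq> {c. \<exists>k \<in> {b..e}. Lsym T SL k = Some c}"
  proof
    fix c assume "c \<in> out T \<alpha>"
    then obtain j where j: "j \<in> st_lex_set T" "j < length T" "suffix \<alpha> (pref T j)" "T ! j = c"
      using hard assms(1,2) by blast
    then obtain i where i: "i < length SL" "SL ! i = j" using assms(3) by (metis in_set_conv_nth)
    have k: "Suc i \<in> {b..e}" using assms(7) i j(3) by auto
    have "Lsym T SL (Suc i) = Some c" using i j by (simp add: Lsym_def)
    then show "c \<in> {c. \<exists>k \<in> {b..e}. Lsym T SL k = Some c}" using k by blast
  qed
next
  show "{c. \<exists>k \<in> {b..e}. Lsym T SL k = Some c} \<subseteq> out T \<alpha>"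
  proof
    fix c assume "c \<in> {c. \<exists>k \<in> {b..e}. Lsym T SL k = Some c}"
    then obtain k where k: "k \<in> {b..e}" "Lsym T SL k = Some c" by blast
    define j where "j = SL ! (k - 1)"
    have kr: "k \<in> {1..length SL}" using k(1) assms(5,6) by auto
    then have "j \<in> st_lex_set T" using assms(3) unfolding j_def by auto
    then have "j \<le> length T" by (rule st_lex_bound)
    moreover have jn: "j \<noteq> length T" "T ! j = c" using k(2) unfolding j_def Lsym_def by (auto split: if_splits)
    ultimately have jl: "j < length T" by simp
    have sa: "suffix \<alpha> (take j T)" using assms(7) kr k(1) unfolding j_def pref_def by auto
    have "take (Suc j) T = take j T @ [c]" using jl jn by (simp add: take_Suc_conv_app_nth)
    then have "suffix (\<alpha> @ [c]) (take (Suc j) T)" using sa by (auto simp: suffix_def)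
    then have "sublist (\<alpha> @ [c]) T"
      by (metis append_take_drop_id sublist_append_leftI suffix_imp_sublist sublist_order.dual_order.trans prefix_imp_sublist prefix_def)
    then show "c \<in> out T \<alpha>" by (simp add: out_def)
  qed
qed

end
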